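(* Let $\mathcal B$ be a BMC with $\mathbf c^*_q<\infty$ for all $q\in\mathcal T$, and consider the Q-learning process with learning rates $\lambda_i\in[0,1]$, a fixed selection distribution $(p_q)_{q\in\mathcal T}$, and initial value $Q_0=\kappa\mathbf c^*$ for a scalar $\kappa\ge 1$. Then for all $i\in\mathbb N$, $\mathbf c^*\le T(\mathbb E Q_i)\le \mathbb E Q_{i+1}\le\mathbb E Q_i$.
   Context: A branching Markov chain (BMC) is $\mathcal B=(\mathcal T,p,c)$ with $\mathcal T$ a finite set of types, $p(q)$ for each $q\in\mathcal T$ a probability distribution with finite support over finite lists $\mathcal T^*$ of types (the offspring distribution), and $c:\mathcal T\to\mathbb R_{>0}$ a strictly positive cost. (It is a BMDP with one action per type.) For a list $\alpha$, $|\alpha|$ is its length and $\alpha_i$ its $i$-th element. Its process: a list of entities; repeatedly some entity of type $q$ is replaced by a list $\beta$ drawn from $p(q)$, incurring cost $c(q)$, until the list is empty. $\mathbf c^*_q\in[0,\infty]$ denotes the expected total cost until extinction starting from the single entity $q$; equivalently $\mathbf c^*$ is the least fixed point in $[0,\infty]^{\mathcal T}$ of $F(\mathbf x)_q=c(q)+\sum_\alpha p(q)(\alpha)\sum_{i=1}^{|\alpha|}\mathbf x_{\alpha_i}$. Q-values for a BMC are vectors $Q\in\mathbb R_{\ge0}^{\mathcal T}$. The target operator is $T(Q)(q)=c(q)+\sum_{\alpha\in\mathcal T^*}p(q)(\alpha)\sum_{j=1}^{|\alpha|}Q(\alpha_j)$ (an affine map $T(Q)=BQ+\mathbf c$ with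 $B$ a nonnegative matrix). Q-learning process: given deterministic learning rates $\lambda_i\in[0,1]$, a probability distribution $(p_q)_{q\in\mathcal T}$ and an initial vector $Q_0\ge\mathbf 0$, at each step $i=0,1,2,\dots$ a type $q_i$ is selected with probability $p_{q_i}$ independently of all previous randomness, then a list $\beta^i$ is drawn from $p(q_i)$ independently, and $Q_{i+1}(q_i)=(1-\lambda_i)Q_i(q_i)+\lambda_i\big(c(q_i)+\sum_{j=1}^{|\beta^i|}Q_i(\beta^i_j)\big)$, while $Q_{i+1}(q)=Q_i(q)$ for $q\ne q_i$. $\mathbb E Q_i$ is the componentwise expectation; inequalities between vectors are componentwise. *)

theory Defs
  imports "HOL-Probability.Probability"
begin

text \<open>A branching Markov chain over a finite type 'q of types: offspring distribution
  p :: 'q => 'q list pmf (finite support), cost c :: 'q => real (strictly positive).\<close>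

definition bmc :: "('q::finite \<Rightarrow> 'q list pmf) \<Rightarrow> ('q \<Rightarrow> real) \<Rightarrow> bool" where
  "bmc p c \<longleftrightarrow> (\<forall>q. finite (set_pmf (p q))) \<and> (\<forall>q. c q > 0)"

definition Fop :: "('q \<Rightarrow> 'q list pmf) \<Rightarrow> ('q \<Rightarrow> real) \<Rightarrow> ('q \<Rightarrow> ennreal) \<Rightarrow> ('q \<Rightarrow> ennreal)" where
  "Fop p c x = (\<lambda>q. ennreal (c q) +
      (\<Sum>\<alpha>\<in>set_pmf (p q). ennreal (pmf (p q) \<alpha>) * (\<Sum>i<length \<alpha>. x (\<alpha> ! i))))"

definition cstar :: "('q \<Rightarrow> 'q list pmf) \<Rightarrow> ('q \<Rightarrow> real) \<Rightarrow> ('q \<Rightarrow> ennreal)" where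
  "cstar p c = lfp (Fop p c)"

definition Top :: "('q \<Rightarrow> 'q list pmf) \<Rightarrow> ('q \<Rightarrow> real) \<Rightarrow> ('q \<Rightarrow> real) \<Rightarrow> ('q \<Rightarrow> real)" where
  "Top p c Q = (\<lambda>q. c q +
      (\<Sum>\<alpha>\<in>set_pmf (p q). pmf (p q) \<alpha> * (\<Sum>j<length \<alpha>. Q (\<alpha> ! j))))"

definition qupdate :: "('q \<Rightarrow> real) \<Rightarrow> real \<Rightarrow> ('q \<Rightarrow> real) \<Rightarrow> 'q \<Rightarrow> 'q list \<Rightarrow> ('q \<Rightarrow> real)" where
  "qupdate c lam Q q \<beta> = Q(q := (1 - lam) * Q q + lam * (c q + (\<Sum>j<length \<beta>. Q (\<beta> ! j))))"

primrec qdist :: "('q \<Rightarrow> 'q list pmf) \<Rightarrow> ('q \<Rightarrow> real) \<Rightarrow> (nat \<Rightarrow> real) \<Rightarrow> 'q pmf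
    \<Rightarrow> ('q \<Rightarrow> real) \<Rightarrow> nat \<Rightarrow> ('q \<Rightarrow> real) pmf" where
  "qdist p c lam sel Q0 0 = return_pmf Q0"
| "qdist p c lam sel Q0 (Suc i) =
     bind_pmf (qdist p c lam sel Q0 i) (\<lambda>Q.
       bind_pmf sel (\<lambda>q.
         bind_pmf (p q) (\<lambda>\<beta>. return_pmf (qupdate c (lam i) Q q \<beta>))))"

definition EQ :: "('q \<Rightarrow> 'q list pmf) \<Rightarrow> ('q \<Rightarrow> real) \<Rightarrow> (nat \<Rightarrow> real) \<Rightarrow> 'q pmf
    \<Rightarrow> ('q \<Rightarrow> real) \<Rightarrow> nat \<Rightarrow> ('q \<Rightarrow> real)" where
  "EQ p c lam sel Q0 i = (\<lambda>q. measure_pmf.expectation (qdist p c lam sel Q0 i) (\<lambda>Q. Q q))"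

end

theory Submission
  imports Defs
begin

lemma fin_qdist:
  fixes p :: "'q::finite \<Rightarrow> 'q list pmf"
  assumes "\<forall>q. finite (set_pmf (p q))"
  shows "finite (set_pmf (qdist p c lam sel Q0 i))"
proof (induction i)
  case 0 then show ?case by simp
next
  case (Suc i)
  show ?case using Suc assms
    by (auto simp: set_bind_pmf intro!: finite_UN_I)
qed

lemma Top_avg:
  assumes "finite S" "set_pmf M \<subseteq> S"
  shows "Top p c (\<lambda>q. \<Sum>Q\<in>S. pmf M Q * Q q) q' = (\<Sum>Q\<in>S. pmf M Q * Top p c Q q')"
proof -
  have s1: "(\<Sum>Q\<in>S. pmf M Q) = 1" using assms sum_pmf_eq_1 by blast
  have "(\<Sum>Q\<in>S. pmf M Q * Top p c Q q') = (\<Sum>Q\<in>S. pmf M Q * c q') +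
     (\<Sum>Q\<in>S. \<Sum>\<alpha>\<in>set_pmf (p q'). \<Sum>j<length \<alpha>. pmf M Q * (pmf (p q') \<alpha> * Q (\<alpha> ! j)))"
    unfolding Top_def by (simp add: distrib_left sum.distrib sum_distrib_left)
  also have "(\<Sum>Q\<in>S. pmf M Q * c q') = c q'" using s1 by (simp add: sum_distrib_right[symmetric])
  also have "(\<Sum>Q\<in>S. \<Sum>\<alpha>\<in>set_pmf (p q'). \<Sum>j<length \<alpha>. pmf M Q * (pmf (p q') \<alpha> * Q (\<alpha> ! j)))
     = (\<Sum>\<alpha>\<in>set_pmf (p q'). \<Sum>j<length \<alpha>. \<Sum>Q\<in>S. pmf M Q * (pmf (p q') \<alpha> * Q (\<alpha> ! j)))"
    by (simp add: sum.swap[of _ S] sum.swap[of _ S "{..<_}"])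
  finally show ?thesis unfolding Top_def
    by (simp add: sum_distrib_left mult.assoc mult.left_commute)
qed

lemma step_exp:
  fixes p :: "'q::finite \<Rightarrow> 'q list pmf"
  assumes "\<forall>q. finite (set_pmf (p q))"
  shows "measure_pmf.expectation (bind_pmf sel (\<lambda>q.
         bind_pmf (p q) (\<lambda>\<beta>. return_pmf (qupdate c l Q q \<beta>)))) (\<lambda>Q'. Q' q')
     = Q q' + pmf sel q' * l * (Top p c Q q' - Q q')"
proof -
  have inner: "measure_pmf.expectation (bind_pmf (p q0) (\<lambda>\<beta>. return_pmf (qupdate c l Q q0 \<beta>))) (\<lambda>Q'. Q' q')
     = Q q' + (if q0 = q' then l * (Top p c Q q' - Q q') else 0)" for q0
  proof -
    have s1: "(\<Sum>\<beta>\<in>set_pmf (p q0). pmf (p q0) \<beta>) = 1" using assms sum_pmf_eq_1 by blast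
    have "measure_pmf.expectation (bind_pmf (p q0) (\<lambda>\<beta>. return_pmf (qupdate c l Q q0 \<beta>))) (\<lambda>Q'. Q' q')
      = (\<Sum>\<beta>\<in>set_pmf (p q0). pmf (p q0) \<beta> * qupdate c l Q q0 \<beta> q')"
      using assms by (subst pmf_expectation_bind[of "set_pmf (p q0)"]) auto
    also have "\<dots> = Q q' + (if q0 = q' then l * (Top p c Q q' - Q q') else 0)"
    proof (cases "q0 = q'")
      case True
      define A where "A = (1 - l) * Q q' + l * c q'"
      define S where "S = (\<lambda>\<beta>::'q list. \<Sum>j<length \<beta>. Q (\<beta> ! j))"
      have qu: "qupdate c l Q q0 \<beta> q' = A + l * S \<beta>" for \<beta>
        using True unfolding qupdate_def A_def S_def by (simp add: distrib_left)
      have "(\<Sum>\<beta>\<in>set_pmf (p q0). pmf (p q0) \<beta> * qupdate c l Q q0 \<beta> q')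
        = (\<Sum>\<beta>\<in>set_pmf (p q0). pmf (p q0) \<beta> * A + l * (pmf (p q0) \<beta> * S \<beta>))"
        unfolding qu by (intro sum.cong) (auto simp: distrib_left)
      also have "\<dots> = (\<Sum>\<beta>\<in>set_pmf (p q0). pmf (p q0) \<beta>) * A + l * (\<Sum>\<beta>\<in>set_pmf (p q0). pmf (p q0) \<beta> * S \<beta>)"
        by (simp only: sum.distrib sum_distrib_left sum_distrib_right)
      also have "\<dots> = A + l * (\<Sum>\<beta>\<in>set_pmf (p q0). pmf (p q0) \<beta> * S \<beta>)"
        using s1 by simp
      also have "\<dots> = Q q' + l * (Top p c Q q' - Q q')"
        unfolding Top_def A_def S_def using True by (simp add: algebra_simps)
      finally show ?thesis using True by simp
    next
      case False
      then have "(\<Sum>\<beta>\<in>set_pmf (p q0). pmf (p q0) \<beta> * qupdate c l Q q0 \<beta> q')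
          = (\<Sum>\<beta>\<in>set_pmf (p q0). pmf (p q0) \<beta>) * Q q'"
        unfolding qupdate_def by (simp add: sum_distrib_right)
      then show ?thesis using s1 False by simp
    qed
    finally show ?thesis .
  qed
  have s2: "(\<Sum>q0\<in>UNIV. pmf sel q0) = 1" by (rule sum_pmf_eq_1) auto
  have "measure_pmf.expectation (bind_pmf sel (\<lambda>q.
         bind_pmf (p q) (\<lambda>\<beta>. return_pmf (qupdate c l Q q \<beta>)))) (\<lambda>Q'. Q' q')
     = (\<Sum>q0\<in>UNIV. pmf sel q0 * (Q q' + (if q0 = q' then l * (Top p c Q q' - Q q') else 0)))"
    using assms by (subst pmf_expectation_bind[of UNIV]) (auto simp: inner set_bind_pmf intro!: finite_UN_I)
  also have "\<dots> = (\<Sum>q0\<in>UNIV. pmf sel q0 * Q q' + (if q0 = q' then pmf sel q' * (l * (Top p c Q q' - Q q')) else 0))"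
    by (intro sum.cong) (auto simp: distrib_left)
  also have "\<dots> = (\<Sum>q0\<in>UNIV. pmf sel q0) * Q q' + pmf sel q' * (l * (Top p c Q q' - Q q'))"
    by (simp only: sum.distrib sum_distrib_right sum.delta) simp
  also have "\<dots> = Q q' + pmf sel q' * l * (Top p c Q q' - Q q')"
    using s2 by simp
  finally show ?thesis .
qed
lemma mono_Fop: "mono (Fop p c)"
proof (rule monoI, rule le_funI)
  fix x y :: "'a \<Rightarrow> ennreal" and q assume "x \<le> y"
  then have "\<And>z. x z \<le> y z" by (simp add: le_fun_def)
  then show "Fop p c x q \<le> Fop p c y q"
    unfolding Fop_def by (intro add_left_mono sum_mono mult_left_mono) auto
qed

lemma Top_mono: "Q \<le> Q' \<Longrightarrow> Top p c Q \<le> Top p c Q'"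
proof (rule le_funI)
  fix q assume "Q \<le> Q'"
  then have "\<And>z. Q z \<le> Q' z" by (simp add: le_fun_def)
  then show "Top p c Q q \<le> Top p c Q' q"
    unfolding Top_def by (intro add_left_mono sum_mono mult_left_mono) auto
qed

lemma cstar_fix:
  assumes fin: "\<forall>q. finite (set_pmf (p q))" and cpos: "\<forall>q. c q > 0"
    and lt: "\<forall>q. cstar p c q < \<infinity>"
  shows "Top p c (\<lambda>q. enn2real (cstar p c q)) = (\<lambda>q. enn2real (cstar p c q))"
proof
  fix q
  define x where "x = (\<lambda>q. enn2real (cstar p c q))"
  have x0: "\<And>q. x q \<ge> 0" unfolding x_def by simp
  have cx: "cstar p c = (\<lambda>q. ennreal (x q))" unfolding x_def using lt by (simp add: fun_eq_iff)
  have "cstar p c = Fop p c (cstar p c)" unfolding cstar_def using mono_Fop lfp_unfold by blast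
  then have "ennreal (x q) = Fop p c (\<lambda>q. ennreal (x q)) q" unfolding cx by (rule fun_cong)
  also have "\<dots> = ennreal (c q) +
      (\<Sum>\<alpha>\<in>set_pmf (p q). ennreal (pmf (p q) \<alpha>) * (\<Sum>i<length \<alpha>. ennreal (x (\<alpha> ! i))))"
    unfolding Fop_def ..
  also have "\<dots> = ennreal (c q) +
      (\<Sum>\<alpha>\<in>set_pmf (p q). ennreal (pmf (p q) \<alpha> * (\<Sum>i<length \<alpha>. x (\<alpha> ! i))))"
  proof -
    have "ennreal (pmf (p q) \<alpha>) * (\<Sum>i<length \<alpha>. ennreal (x (\<alpha> ! i)))
          = ennreal (pmf (p q) \<alpha> * (\<Sum>i<length \<alpha>. x (\<alpha> ! i)))" for \<alpha>
    proof -
      have "(\<Sum>i<length \<alpha>. ennreal (x (\<alpha> ! i))) = ennreal (\<Sum>i<length \<alpha>. x (\<alpha> ! i))"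
        using x0 by (rule sum_ennreal)
      moreover have "(\<Sum>i<length \<alpha>. x (\<alpha> ! i)) \<ge> 0" using x0 by (rule sum_nonneg)
      ultimately show ?thesis by (simp add: ennreal_mult)
    qed
    then show ?thesis by simp
  qed
  also have "\<dots> = ennreal (Top p c x q)"
  proof -
    have nn: "\<And>\<alpha>. pmf (p q) \<alpha> * (\<Sum>i<length \<alpha>. x (\<alpha> ! i)) \<ge> 0"
      using x0 by (simp add: sum_nonneg)
    have "(\<Sum>\<alpha>\<in>set_pmf (p q). ennreal (pmf (p q) \<alpha> * (\<Sum>i<length \<alpha>. x (\<alpha> ! i))))
        = ennreal (\<Sum>\<alpha>\<in>set_pmf (p q). pmf (p q) \<alpha> * (\<Sum>i<length \<alpha>. x (\<alpha> ! i)))"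
      using nn by (rule sum_ennreal)
    moreover have "(\<Sum>\<alpha>\<in>set_pmf (p q). pmf (p q) \<alpha> * (\<Sum>i<length \<alpha>. x (\<alpha> ! i))) \<ge> 0"
      using nn by (rule sum_nonneg)
    ultimately show ?thesis unfolding Top_def using cpos[rule_format, of q]
      by (simp add: ennreal_plus)
  qed
  finally have e: "ennreal (x q) = ennreal (Top p c x q)" .
  have "Top p c x q \<ge> 0" unfolding Top_def using x0 cpos[rule_format, of q]
    by (intro add_nonneg_nonneg sum_nonneg mult_nonneg_nonneg) auto
  then have "x q = Top p c x q" using e x0[of q] by simp
  then show "Top p c (\<lambda>q. enn2real (cstar p c q)) q = enn2real (cstar p c q)" unfolding x_def by simp
qed

lemma EQ_sum:
  fixes p :: "'q::finite \<Rightarrow> 'q list pmf"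
  assumes "\<forall>q. finite (set_pmf (p q))"
  shows "EQ p c lam sel Q0 i = (\<lambda>q. \<Sum>Q\<in>set_pmf (qdist p c lam sel Q0 i). pmf (qdist p c lam sel Q0 i) Q * Q q)"
  unfolding EQ_def using fin_qdist[OF assms]
  by (auto intro!: ext simp: integral_measure_pmf_real[where A="set_pmf _"] mult.commute)

lemma EQ_rec:
  fixes p :: "'q::finite \<Rightarrow> 'q list pmf"
  assumes fin: "\<forall>q. finite (set_pmf (p q))"
  shows "EQ p c lam sel Q0 (Suc i) q = EQ p c lam sel Q0 i q
     + pmf sel q * lam i * (Top p c (EQ p c lam sel Q0 i) q - EQ p c lam sel Q0 i q)"
proof -
  define M where "M = qdist p c lam sel Q0 i"
  define S where "S = set_pmf M"
  have fS: "finite S" unfolding S_def M_def using fin_qdist[OF fin] .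
  have "EQ p c lam sel Q0 (Suc i) q = (\<Sum>Q\<in>S. pmf M Q * (Q q + pmf sel q * lam i * (Top p c Q q - Q q)))"
    unfolding EQ_def qdist.simps M_def[symmetric] S_def
    using fS fin
    by (subst pmf_expectation_bind[of S]) (auto simp: S_def step_exp set_bind_pmf intro!: finite_UN_I)
  also have "\<dots> = (\<Sum>Q\<in>S. pmf M Q * Q q) + pmf sel q * lam i * ((\<Sum>Q\<in>S. pmf M Q * Top p c Q q) - (\<Sum>Q\<in>S. pmf M Q * Q q))"
    by (simp add: sum.distrib distrib_left sum_distrib_left sum_subtractf right_diff_distrib algebra_simps)
  also have "(\<Sum>Q\<in>S. pmf M Q * Top p c Q q) = Top p c (\<lambda>q. \<Sum>Q\<in>S. pmf M Q * Q q) q"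
    using Top_avg[OF fS, of M] S_def by simp
  finally show ?thesis using EQ_sum[OF fin] unfolding M_def S_def by metis
qed

theorem lemma1:
  fixes p :: "'q::finite \<Rightarrow> 'q list pmf" and c :: "'q \<Rightarrow> real"
    and lam :: "nat \<Rightarrow> real" and sel :: "'q pmf" and \<kappa> :: real
  assumes "bmc p c"
    and "\<forall>q. cstar p c q < \<infinity>"
    and "\<forall>i. 0 \<le> lam i \<and> lam i \<le> 1"
    and "\<kappa> \<ge> 1"
  shows "\<forall>i. (\<lambda>q. enn2real (cstar p c q))
              \<le> Top p c (EQ p c lam sel (\<lambda>q. \<kappa> * enn2real (cstar p c q)) i)
           \<and> Top p c (EQ p c lam sel (\<lambda>q. \<kappa> * enn2real (cstar p c q)) i)
              \<le> EQ p c lam sel (\<lambda>q. \<kappa> * enn2real (cstar p c q)) (Suc i)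
           \<and> EQ p c lam sel (\<lambda>q. \<kappa> * enn2real (cstar p c q)) (Suc i)
              \<le> EQ p c lam sel (\<lambda>q. \<kappa> * enn2real (cstar p c q)) i"
proof -
  have fin: "\<forall>q. finite (set_pmf (p q))" and cpos: "\<forall>q. c q > 0" using assms(1) unfolding bmc_def by auto
  define x where "x = (\<lambda>q. enn2real (cstar p c q))"
  have x0: "\<And>q. x q \<ge> 0" unfolding x_def by simp
  have hfix: "Top p c x = x" unfolding x_def using cstar_fix[OF fin cpos assms(2)] .
  define E where "E = EQ p c lam sel (\<lambda>q. \<kappa> * x q)"
  have rec: "E (Suc i) q = E i q + pmf sel q * lam i * (Top p c (E i) q - E i q)" for i q
    unfolding E_def using EQ_rec[OF fin] .
  have between: "Top p c (E i) \<le> E (Suc i) \<and> E (Suc i) \<le> E i" if "Top p c (E i) \<le> E i" for i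
  proof (intro conjI le_funI)
    fix q
    have a: "0 \<le> pmf sel q * lam i" "pmf sel q * lam i \<le> 1"
      using assms(3) pmf_le_1[of sel q] by (auto intro: mult_le_one)
    have d: "Top p c (E i) q - E i q \<le> 0" using that by (simp add: le_fun_def)
    show "E (Suc i) q \<le> E i q" unfolding rec using a d by (simp add: mult_nonneg_nonpos)
    have "pmf sel q * lam i * (Top p c (E i) q - E i q) \<ge> 1 * (Top p c (E i) q - E i q)"
      using a d by (intro mult_right_mono_neg) auto
    then show "Top p c (E i) q \<le> E (Suc i) q" unfolding rec by simp
  qed
  have inv: "x \<le> E i \<and> Top p c (E i) \<le> E i" for i
  proof (induction i)
    case 0
    have E0: "E 0 = (\<lambda>q. \<kappa> * x q)" unfolding E_def EQ_def by simp
    have T0: "Top p c (\<lambda>q. \<kappa> * x q) q = c q + \<kappa> * (x q - c q)" for q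
    proof -
      have "x q - c q = (\<Sum>\<alpha>\<in>set_pmf (p q). pmf (p q) \<alpha> * (\<Sum>j<length \<alpha>. x (\<alpha> ! j)))"
        using fun_cong[OF hfix, of q] unfolding Top_def by simp
      then show ?thesis unfolding Top_def by (simp add: sum_distrib_left algebra_simps)
    qed
    show ?case
    proof (intro conjI le_funI)
      fix q
      show "x q \<le> E 0 q" unfolding E0 using x0[of q] assms(4) by (simp add: mult_le_cancel_right1)
      have "c q + \<kappa> * (x q - c q) \<le> \<kappa> * x q"
        using cpos[rule_format, of q] assms(4) by (simp add: algebra_simps)
      then show "Top p c (E 0) q \<le> E 0 q" unfolding E0 T0 .
    qed
  next
    case (Suc i)
    have b: "Top p c (E i) \<le> E (Suc i)" "E (Suc i) \<le> E i" using between Suc by auto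
    have "x = Top p c x" using hfix by simp
    also have "\<dots> \<le> Top p c (E i)" using Suc Top_mono by blast
    finally have "x \<le> E (Suc i)" using b by simp
    moreover have "Top p c (E (Suc i)) \<le> E (Suc i)"
      using Top_mono[OF b(2)] b(1) Suc by (meson order_trans)
    ultimately show ?case by simp
  qed
  have res: "\<forall>i. x \<le> Top p c (E i) \<and> Top p c (E i) \<le> E (Suc i) \<and> E (Suc i) \<le> E i"
  proof
    fix i
    have "x = Top p c x" using hfix by simp
    also have "\<dots> \<le> Top p c (E i)" using inv Top_mono by blast
    finally show "x \<le> Top p c (E i) \<and> Top p c (E i) \<le> E (Suc i) \<and> E (Suc i) \<le> E i"
      using between inv by blast
  qed
  then show ?thesis unfolding E_def x_def .
qed

end
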